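(* Let $n\ge2$, $K\in\{1,\ldots,n-1\}$, $\gamma>0$, $\mathcal{C}=\{x\in\mathbb{R}^n\mid \mathbf{1}^\top x=1,\ x\ge0\}$, and let $f$ be real-valued and continuously differentiable on an open set $\mathcal{O}\supset\mathcal{C}$. Let $x^*$ be a d-stationary point of $$\min_{x\in\mathbb{R}^n}\ f(x)+\gamma T_{K,n,1}(x)+\delta_{\mathcal C}(x).$$ If $\gamma>\sqrt2 M'$, where $M'$ is a Lipschitz constant of $f$ on $\mathcal C$ with respect to the $\ell_2$ norm, then $T_{K,n,1}(x^* )=0$. If in addition $0\in\mathcal O$ and $f$ is $M$-smooth on $\mathcal O$, then $T_{K,n,1}(x^* )=0$ holds whenever $\gamma>\min\{\sqrt2M',\ \sqrt2(\|\nabla f(0)\|_2+M)\}$.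
   Context: $T_{K,n,1}(x)$ is the sum of the $n-K$ smallest values among $|x_1|,\ldots,|x_n|$; $\mathbf 1$ is the all-ones vector; $\delta_{\mathcal C}$ is the indicator of $\mathcal C$. $f$ is $M$-smooth on $\mathcal O$ if $\|\nabla f(x)-\nabla f(y)\|_2\le M\|x-y\|_2$ for $x,y\in\mathcal O$. $x^*\in\mathcal C$ is d-stationary if the directional derivative of the objective at $x^*$ is $\ge0$ for every $d$ in the feasible cone $\mathcal{F}(x^*;\mathcal{C})=\{d\mid \exists\varsigma'>0:\ x^*+\varsigma d\in\mathcal{C}\ \forall\varsigma\in(0,\varsigma')\}$. *)

theory Defs
  imports "HOL-Analysis.Analysis" "HOL-Library.Multiset"
begin

definition T_K :: "nat \<Rightarrow> real ^ 'n \<Rightarrow> real" where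
  "T_K K x = sum_list (take (CARD('n) - K)
      (sorted_list_of_multiset (image_mset (\<lambda>i. \<bar>x $ i\<bar>) (mset_set (UNIV :: 'n set)))))"

definition std_simplex :: "(real ^ 'n) set" where
  "std_simplex = {x. (\<Sum>i\<in>UNIV. x $ i) = 1 \<and> (\<forall>i. 0 \<le> x $ i)}"

definition indicator_ext :: "'a set \<Rightarrow> 'a \<Rightarrow> ereal" where
  "indicator_ext C x = (if x \<in> C then 0 else \<infinity>)"

definition feasible_cone :: "(real ^ 'n) set \<Rightarrow> real ^ 'n \<Rightarrow> (real ^ 'n) set" where
  "feasible_cone C x = {d. \<exists>s'>0. \<forall>s. 0 < s \<and> s < s' \<longrightarrow> x + s *\<^sub>R d \<in> C}"

definition d_stationary :: "(real ^ 'n \<Rightarrow> ereal) \<Rightarrow> (real ^ 'n) set \<Rightarrow> real ^ 'n \<Rightarrow> bool" where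
  "d_stationary F C x \<longleftrightarrow> x \<in> C \<and>
     (\<forall>d \<in> feasible_cone C x. \<exists>L::ereal.
        ((\<lambda>t. (F (x + t *\<^sub>R d) - F x) / ereal t) \<longlongrightarrow> L) (at_right 0) \<and> 0 \<le> L)"

end

theory Submission
  imports Defs
begin

lemma take_sorted_le:
  fixes W :: "real multiset"
  shows "Z \<subseteq># W \<Longrightarrow> sum_list (take (size Z) (sorted_list_of_multiset W)) \<le> sum_mset Z"
proof (induction W arbitrary: Z rule: multiset_induct_min)
  case empty
  then show ?case by simp
next
  case (add x M)
  have sl: "sorted_list_of_multiset (add_mset x M) = x # sorted_list_of_multiset M"
    using add.hyps by (simp add: insort_is_Cons)
  show ?case
  proof (cases "Z = {#}")
    case True then show ?thesis by simp
  next
    case False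
    show ?thesis
    proof (cases "x \<in># Z")
      case True
      define Z' where "Z' = Z - {#x#}"
      have Z: "Z = add_mset x Z'" using True Z'_def by simp
      have "Z' \<subseteq># M" using add.prems Z by simp
      from add.IH[OF this] show ?thesis using Z sl by simp
    next
      case False
      obtain z where z: "z \<in># Z" using \<open>Z \<noteq> {#}\<close> by blast
      define Z' where "Z' = Z - {#z#}"
      have Z: "Z = add_mset z Z'" using z Z'_def by simp
      have "Z \<subseteq># M" using add.prems False
        by (simp add: inter_add_left1 subset_mset.inf.absorb_iff2)
      then have "Z' \<subseteq># M" using Z by (meson mset_subset_eq_insertD subset_mset.dual_order.strict_implies_order)
      from add.IH[OF this] have "sum_list (take (size Z') (sorted_list_of_multiset M)) \<le> sum_mset Z'" .
      moreover have "x \<le> z" using add.hyps \<open>Z \<subseteq># M\<close> z by (meson mset_subset_eqD)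
      ultimately show ?thesis using Z sl by simp
    qed
  qed
qed

lemma T_K_le:
  fixes y :: "real^'n"
  assumes "card S = CARD('n) - K"
  shows "T_K K y \<le> (\<Sum>k\<in>S. \<bar>y$k\<bar>)"
proof -
  let ?g = "\<lambda>i. \<bar>y$i\<bar>"
  let ?Z = "image_mset ?g (mset_set S)"
  have "mset_set S \<subseteq># mset_set (UNIV::'n set)" by (rule subset_imp_msubset_mset_set) auto
  hence "?Z \<subseteq># image_mset ?g (mset_set UNIV)" by (rule image_mset_subseteq_mono)
  from take_sorted_le[OF this]
  have "sum_list (take (size ?Z) (sorted_list_of_multiset (image_mset ?g (mset_set UNIV)))) \<le> sum_mset ?Z" .
  moreover have "size ?Z = card S" by simp
  ultimately show ?thesis by (simp add: T_K_def sum_unfold_sum_mset assms)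
qed

lemma map_insort_key: "map f (insort_key f x ys) = insort (f x) (map f ys)"
  by (induction ys) auto

lemma sort_map_key: "sort (map f xs) = map f (sort_key f xs)"
  by (induction xs) (auto simp: map_insort_key)

lemma T_K_repr:
  fixes y :: "real^'n"
  obtains S where "card S = CARD('n) - K" "T_K K y = (\<Sum>k\<in>S. \<bar>y$k\<bar>)"
proof -
  obtain ids where d: "distinct ids" "set ids = (UNIV::'n set)"
    using finite_distinct_list[of "UNIV::'n set"] by auto
  let ?g = "\<lambda>i. \<bar>y$i\<bar>"
  let ?m = "CARD('n) - K"
  define js where "js = sort_key ?g ids"
  have dj: "distinct js" "length js = CARD('n)"
    using d distinct_card[OF d(1)] by (auto simp: js_def)
  have "mset_set (UNIV::'n set) = mset ids" using mset_set_set[OF d(1)] d(2) by simp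
  hence "T_K K y = sum_list (take ?m (map ?g js))"
    by (simp add: T_K_def sort_map_key js_def mset_map[symmetric] del: mset_map)
  also have "\<dots> = sum_list (map ?g (take ?m js))" by (simp add: take_map)
  also have "\<dots> = sum ?g (set (take ?m js))"
    using dj by (simp add: sum_list_distinct_conv_sum_set distinct_take)
  finally have "T_K K y = sum ?g (set (take ?m js))" .
  moreover have "card (set (take ?m js)) = ?m"
    using dj by (simp add: distinct_card distinct_take)
  ultimately show ?thesis using that by blast
qed


lemma key:
  fixes f :: "real ^ 'n \<Rightarrow> real" and xs :: "real^'n"
  assumes K: "1 \<le> K"
  and dstat: "d_stationary (\<lambda>x. ereal (f x + \<gamma> * T_K K x) + indicator_ext std_simplex x) std_simplex xs"
  and lip: "L-lipschitz_on std_simplex f" and gl: "\<gamma> > sqrt 2 * L"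
  shows "T_K K xs = 0"
proof (rule ccontr)
  assume ne: "T_K K xs \<noteq> 0"
  define F where "F = (\<lambda>x. ereal (f x + \<gamma> * T_K K x) + indicator_ext std_simplex x)"
  have L0: "0 \<le> L" using lip by (simp add: lipschitz_on_def)
  have g0: "\<gamma> \<ge> 0" using gl L0 by (smt (verit) real_sqrt_ge_zero mult_nonneg_nonneg)
  have xC: "xs \<in> std_simplex" using dstat by (simp add: d_stationary_def)
  obtain S where S: "card S = CARD('n) - K" "T_K K xs = (\<Sum>k\<in>S. \<bar>xs$k\<bar>)" by (rule T_K_repr)
  obtain i where i: "i \<in> S" "xs$i \<noteq> 0" using ne S(2) by (metis (no_types, lifting) abs_eq_0 sum.neutral)
  have xi: "xs$i > 0" using xC i by (auto simp: std_simplex_def less_le)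
  have "S \<noteq> UNIV"
  proof
    assume "S = UNIV"
    then have "card S = CARD('n)" by simp
    moreover have "CARD('n) > 0" by simp
    ultimately show False using S(1) K by linarith
  qed
  then obtain j where j: "j \<notin> S" by auto
  have ij: "i \<noteq> j" using i j by auto
  define d where "d = axis j (1::real) - axis i 1"
  have comp: "\<And>k. d$k = (if k = j then 1 else 0) - (if k = i then 1 else 0)"
    by (simp add: d_def axis_def)
  have "d \<bullet> d = 2" using ij
    by (simp add: d_def inner_diff_left inner_diff_right inner_axis_axis)
  then have nd: "norm d = sqrt 2" by (simp add: norm_eq_sqrt_inner)
  have yC: "xs + t *\<^sub>R d \<in> std_simplex" if "0 \<le> t" "t \<le> xs$i" for t
  proof -
    have "(\<Sum>k\<in>UNIV. (xs + t *\<^sub>R d) $ k) = (\<Sum>k\<in>UNIV. xs$k) + t * (\<Sum>k\<in>UNIV. d$k)"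
      by (simp add: sum.distrib sum_distrib_left)
    also have "(\<Sum>k\<in>UNIV. d$k) = 0" by (simp add: comp sum_subtractf)
    also have "(\<Sum>k\<in>UNIV. xs$k) = 1" using xC by (simp add: std_simplex_def)
    finally have s1: "(\<Sum>k\<in>UNIV. (xs + t *\<^sub>R d) $ k) = 1" by simp
    have "0 \<le> (xs + t *\<^sub>R d) $ k" for k
      using xC that ij by (auto simp: comp std_simplex_def)
    with s1 show ?thesis by (simp add: std_simplex_def)
  qed
  have Tle: "T_K K (xs + t *\<^sub>R d) \<le> T_K K xs - t" if "0 \<le> t" "t \<le> xs$i" for t
  proof -
    have "T_K K (xs + t *\<^sub>R d) \<le> (\<Sum>k\<in>S. \<bar>(xs + t *\<^sub>R d)$k\<bar>)" by (rule T_K_le[OF S(1)])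
    also have "\<dots> = (\<Sum>k\<in>S. \<bar>xs$k\<bar> - (if k = i then t else 0))"
    proof (rule sum.cong)
      fix k assume "k \<in> S"
      then have "k \<noteq> j" using j by auto
      then show "\<bar>(xs + t *\<^sub>R d)$k\<bar> = \<bar>xs$k\<bar> - (if k = i then t else 0)"
        using that xi by (auto simp: comp)
    qed simp
    also have "\<dots> = T_K K xs - t" using i(1) by (simp add: sum_subtractf S(2))
    finally show ?thesis .
  qed
  have fle: "f (xs + t *\<^sub>R d) - f xs \<le> L * (t * sqrt 2)" if "0 \<le> t" "t \<le> xs$i" for t
  proof -
    have "dist (f (xs + t *\<^sub>R d)) (f xs) \<le> L * dist (xs + t *\<^sub>R d) xs"
      by (rule lipschitz_onD[OF lip yC[OF that] xC])
    moreover have "dist (xs + t *\<^sub>R d) xs = t * sqrt 2" using that nd by (simp add: dist_norm)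
    ultimately show ?thesis by (simp add: dist_real_def)
  qed
  have ev: "eventually (\<lambda>t. (F (xs + t *\<^sub>R d) - F xs) / ereal t \<le> ereal (sqrt 2 * L - \<gamma>)) (at_right 0)"
    unfolding eventually_at_right_field
  proof (intro exI[of _ "xs$i"] conjI allI impI)
    fix t :: real assume t: "0 < t" "t < xs$i"
    have Fy: "F (xs + t *\<^sub>R d) = ereal (f (xs + t *\<^sub>R d) + \<gamma> * T_K K (xs + t *\<^sub>R d))"
      using yC[of t] t by (simp add: F_def indicator_ext_def)
    have Fx: "F xs = ereal (f xs + \<gamma> * T_K K xs)"
      using xC by (simp add: F_def indicator_ext_def)
    have A: "f (xs + t *\<^sub>R d) + \<gamma> * T_K K (xs + t *\<^sub>R d) - (f xs + \<gamma> * T_K K xs) \<le> (sqrt 2 * L - \<gamma>) * t"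
    proof -
      have "\<gamma> * T_K K (xs + t *\<^sub>R d) \<le> \<gamma> * (T_K K xs - t)"
        using Tle[of t] t g0 by (intro mult_left_mono) auto
      then show ?thesis using fle[of t] t by (simp add: algebra_simps)
    qed
    have "(f (xs + t *\<^sub>R d) + \<gamma> * T_K K (xs + t *\<^sub>R d) - (f xs + \<gamma> * T_K K xs)) / t \<le> sqrt 2 * L - \<gamma>"
      using A t by (simp add: divide_le_eq)
    then show "(F (xs + t *\<^sub>R d) - F xs) / ereal t \<le> ereal (sqrt 2 * L - \<gamma>)"
      using t by (simp add: Fy Fx)
  qed (use xi in auto)
  have "d \<in> feasible_cone std_simplex xs"
    unfolding feasible_cone_def using yC xi by (auto intro!: exI[of _ "xs$i"])
  then obtain Lim where lim: "((\<lambda>t. (F (xs + t *\<^sub>R d) - F xs) / ereal t) \<longlongrightarrow> Lim) (at_right 0)" "0 \<le> Lim"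
    using dstat unfolding d_stationary_def F_def by blast
  have "Lim \<le> ereal (sqrt 2 * L - \<gamma>)"
    by (rule tendsto_le[OF _ tendsto_const lim(1) ev]) simp
  with lim(2) have "ereal 0 \<le> ereal (sqrt 2 * L - \<gamma>)" by (metis order_trans zero_ereal_def)
  with gl show False by simp
qed


lemma simplex_convex: "convex (std_simplex :: (real^'n) set)"
  unfolding convex_def
proof (intro ballI allI impI)
  fix x y :: "real^'n" and u v :: real
  assume x: "x \<in> std_simplex" and y: "y \<in> std_simplex" and uv: "0 \<le> u" "0 \<le> v" "u + v = 1"
  have "(\<Sum>i\<in>UNIV. (u *\<^sub>R x + v *\<^sub>R y) $ i) = u * (\<Sum>i\<in>UNIV. x$i) + v * (\<Sum>i\<in>UNIV. y$i)"
    by (simp add: sum.distrib sum_distrib_left)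
  also have "\<dots> = 1" using x y uv by (simp add: std_simplex_def)
  finally show "u *\<^sub>R x + v *\<^sub>R y \<in> std_simplex"
    using x y uv by (simp add: std_simplex_def)
qed

lemma simplex_norm: "x \<in> std_simplex \<Longrightarrow> norm (x :: real^'n) \<le> 1"
proof -
  assume x: "x \<in> std_simplex"
  have "norm x \<le> (\<Sum>i\<in>UNIV. \<bar>x$i\<bar>)" by (rule norm_le_l1_cart)
  also have "\<dots> = (\<Sum>i\<in>UNIV. x$i)" using x by (simp add: std_simplex_def)
  also have "\<dots> = 1" using x by (simp add: std_simplex_def)
  finally show ?thesis .
qed

theorem mainTheorem13:
  fixes f :: "real ^ 'n \<Rightarrow> real" and gradf :: "real ^ 'n \<Rightarrow> real ^ 'n"
    and Op :: "(real ^ 'n) set" and K :: nat and \<gamma> M' M :: real and xs :: "real ^ 'n"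
  assumes n2: "CARD('n) \<ge> 2"
    and K: "1 \<le> K" "K \<le> CARD('n) - 1"
    and gamma: "\<gamma> > 0"
    and Oh: "open Op" "std_simplex \<subseteq> Op"
    and grad: "\<And>x. x \<in> Op \<Longrightarrow> (f has_derivative (\<lambda>h. gradf x \<bullet> h)) (at x)"
    and cont: "continuous_on Op gradf"
    and dstat: "d_stationary (\<lambda>x. ereal (f x + \<gamma> * T_K K x) + indicator_ext std_simplex x) std_simplex xs"
    and lip: "M'-lipschitz_on std_simplex f"
  shows "(\<gamma> > sqrt 2 * M' \<longrightarrow> T_K K xs = 0) \<and>
         ((0 \<in> Op \<and> (\<forall>x\<in>Op. \<forall>y\<in>Op. norm (gradf x - gradf y) \<le> M * norm (x - y))
            \<and> \<gamma> > min (sqrt 2 * M') (sqrt 2 * (norm (gradf 0) + M))) \<longrightarrow> T_K K xs = 0)"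
proof -
  have P1: "T_K K xs = 0" if "\<gamma> > sqrt 2 * M'" using key[OF K(1) dstat lip that] .
  have P2: "T_K K xs = 0" if o: "0 \<in> Op" and gl: "\<forall>x\<in>Op. \<forall>y\<in>Op. norm (gradf x - gradf y) \<le> M * norm (x - y)"
    and g: "\<gamma> > sqrt 2 * (norm (gradf 0) + M)"
  proof -
    define B where "B = norm (gradf 0) + M"
    have xC: "xs \<in> std_simplex" using dstat by (simp add: d_stationary_def)
    have "xs \<noteq> 0" using xC by (auto simp: std_simplex_def)
    then have nx: "norm xs > 0" by simp
    have "norm (gradf xs - gradf 0) \<le> M * norm (xs - 0)" using gl o xC Oh(2) by blast
    then have "0 \<le> M * norm xs" by (metis diff_zero norm_ge_zero order_trans)
    then have M0: "M \<ge> 0" using nx by (simp add: zero_le_mult_iff)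
    have gb: "norm (gradf x) \<le> B" if x: "x \<in> std_simplex" for x
    proof -
      have "norm (gradf x - gradf 0) \<le> M * norm (x - 0)" using gl o x Oh(2) by blast
      also have "\<dots> \<le> M * 1" using mult_left_mono[OF simplex_norm[OF x] M0] by simp
      finally have "norm (gradf x - gradf 0) \<le> M" by simp
      moreover have "norm (gradf x) \<le> norm (gradf 0) + norm (gradf x - gradf 0)"
        by (metis add.commute diff_add_cancel norm_triangle_ineq)
      ultimately show ?thesis by (simp add: B_def)
    qed
    have B0: "B \<ge> 0" using M0 by (simp add: B_def)
    have "B-lipschitz_on std_simplex f"
    proof (rule lipschitz_onI[OF _ B0])
      fix x y :: "real^'n" assume x: "x \<in> std_simplex" and y: "y \<in> std_simplex"
      have "norm (f x - f y) \<le> B * norm (x - y)"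
      proof (rule differentiable_bound[OF simplex_convex _ _ x y])
        fix z :: "real^'n" assume z: "z \<in> std_simplex"
        show "(f has_derivative (\<lambda>h. gradf z \<bullet> h)) (at z within std_simplex)"
          using grad[of z] z Oh(2) by (auto intro: has_derivative_at_withinI)
        show "onorm (\<lambda>h. gradf z \<bullet> h) \<le> B"
        proof (rule onorm_bound[OF B0])
          fix h :: "real^'n"
          have "norm (gradf z \<bullet> h) \<le> norm (gradf z) * norm h" by (simp add: Cauchy_Schwarz_ineq2)
          also have "\<dots> \<le> B * norm h" using gb[OF z] by (simp add: mult_right_mono)
          finally show "norm (gradf z \<bullet> h) \<le> B * norm h" .
        qed
      qed
      then show "dist (f x) (f y) \<le> B * dist x y" by (simp add: dist_norm)
    qed
    from key[OF K(1) dstat this] g show ?thesis by (simp add: B_def)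
  qed
  show ?thesis using P1 P2 by (auto simp: min_less_iff_disj)
qed

end
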